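(* For each $k$ with $0\leq k\leq 4$, the edge set of $Q_8$ can be partitioned into the edge set of a DVOP$[k]$ in $Q_8$ and the edge sets of $4-k$ Hamiltonian cycles (copies of $C_{256}$) of $Q_8$.
   Context: $Q_8$ denotes the $8$-dimensional hypercube graph (vertices are $8$-tuples of $0$'s and $1$'s, adjacent iff they differ in exactly one coordinate). $C_N$ is the cycle on $N$ vertices. $P_k$ is the path with vertices $0,1,\dots,k$ and edges $\hat{j}$ joining $j-1$ and $j$. For a graph $G$, a DVOP$[k]$ is a family $\{p_v\}_{v\in V(G)}$ of embeddings $p_v:P_k\to G$ such that (a) $p_v(\hat{j})=p_{v'}(\hat{j'})$ implies $v=v'$ and $j=j'$, and (b) $p_v(0)=v$ for every $v$; its edge set is the union of the edge images of all $p_v$. *)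

theory Defs
  imports Main
begin

text \<open>Simple graphs are given by a vertex set V and a symmetric irreflexive
adjacency relation adj; an (undirected) edge is the two-element set {u,v}.\<close>

definition Q8_verts :: "bool list set" where
  "Q8_verts = {xs. length xs = 8}"

definition Q8_adj :: "bool list \<Rightarrow> bool list \<Rightarrow> bool" where
  "Q8_adj xs ys \<longleftrightarrow> length xs = 8 \<and> length ys = 8 \<and>
     card {i. i < 8 \<and> xs ! i \<noteq> ys ! i} = 1"

definition graph_edges :: "'a set \<Rightarrow> ('a \<Rightarrow> 'a \<Rightarrow> bool) \<Rightarrow> 'a set set" where
  "graph_edges V adj = {{u, v} | u v. u \<in> V \<and> v \<in> V \<and> adj u v}"

definition path_embedding :: "'a set \<Rightarrow> ('a \<Rightarrow> 'a \<Rightarrow> bool) \<Rightarrow> nat \<Rightarrow> (nat \<Rightarrow> 'a) \<Rightarrow> bool" where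
  "path_embedding V adj k f \<longleftrightarrow> (\<forall>j\<le>k. f j \<in> V) \<and> inj_on f {0..k} \<and>
     (\<forall>j\<in>{1..k}. adj (f (j - 1)) (f j))"

definition path_edge :: "(nat \<Rightarrow> 'a) \<Rightarrow> nat \<Rightarrow> 'a set" where
  "path_edge f j = {f (j - 1), f j}"

definition is_DVOP :: "'a set \<Rightarrow> ('a \<Rightarrow> 'a \<Rightarrow> bool) \<Rightarrow> nat \<Rightarrow> ('a \<Rightarrow> nat \<Rightarrow> 'a) \<Rightarrow> bool" where
  "is_DVOP V adj k p \<longleftrightarrow>
     (\<forall>v\<in>V. path_embedding V adj k (p v) \<and> p v 0 = v) \<and>
     (\<forall>v\<in>V. \<forall>v'\<in>V. \<forall>j\<in>{1..k}. \<forall>j'\<in>{1..k}.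
        path_edge (p v) j = path_edge (p v') j' \<longrightarrow> v = v' \<and> j = j')"

definition DVOP_edges :: "'a set \<Rightarrow> nat \<Rightarrow> ('a \<Rightarrow> nat \<Rightarrow> 'a) \<Rightarrow> 'a set set" where
  "DVOP_edges V k p = {path_edge (p v) j | v j. v \<in> V \<and> j \<in> {1..k}}"

definition hamiltonian_cycle :: "'a set \<Rightarrow> ('a \<Rightarrow> 'a \<Rightarrow> bool) \<Rightarrow> 'a set set \<Rightarrow> bool" where
  "hamiltonian_cycle V adj H \<longleftrightarrow> (\<exists>c. bij_betw c {..<card V} V \<and>
     (\<forall>i<card V. adj (c i) (c ((i + 1) mod card V))) \<and>
     H = {{c i, c ((i + 1) mod card V)} | i. i < card V})"

end

theory Submission
  imports Defs
begin

datatype dt = Lf "nat list" | Nd dt dt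

fun look :: "dt \<Rightarrow> bool list \<Rightarrow> nat list" where
  "look (Lf x) _ = x"
| "look (Nd l r) (b#bs) = look (if b then r else l) bs"
| "look (Nd l r) [] = []"

fun flip :: "bool list \<Rightarrow> nat \<Rightarrow> bool list" where
  "flip [] _ = []"
| "flip (b#bs) n = (if n = 0 then (\<not>b) # bs else b # flip bs (n - 1))"

declare flip.simps(2)[simp del]

lemma flip_Cons: "flip (b#bs) n = (if n = 0 then (\<not>b) # bs else b # flip bs (n - 1))"
  by (rule flip.simps)

lemma flip_ev: "flip (b#bs) 0 = (\<not>b) # bs" "flip (b#bs) (Suc n) = b # flip bs n"
  "flip (b#bs) (numeral m) = b # flip bs (pred_numeral m)"
  by (simp_all add: flip_Cons)

definition T :: dt where "T = Nd (Nd (Nd (Nd (Nd (Nd (Nd (Nd (Lf [1,4,6,3]) (Lf [1,3,5,7])) (Nd (Lf [0,5,4,3]) (Lf [7,6,5,1]))) (Nd (Nd (Lf [2,5,0,7]) (Lf [1,6,4,3])) (Nd (Lf [4,6,1,7]) (Lf [3,2,0,4])))) (Nd (Nd (Nd (Lf [0,2,3,6]) (Lf [4,6,7,0])) (Nd (Lf [7,2,5,1]) (Lf [2,0,5,4]))) (Nd (Nd (Lf [1,3,4,5]) (Lf [0,2,7,5])) (Nd (Lf [0,6,1,2]) (Lf [6,2,0,7]))))) (Nd (Nd (Nd (Nd (Lf [0,6,5,7]) (Lf [4,2,5,6])) (Nd (Lf [0,5,2,1]) (Lf [7,2,3,1]))) (Nd (Nd (Lf [6,2,4,3]) (Lf [0,7,4,2]))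 (Nd (Lf [1,7,3,0]) (Lf [6,1,5,2])))) (Nd (Nd (Nd (Lf [1,6,4,5]) (Lf [7,3,2,6])) (Nd (Lf [0,3,4,5]) (Lf [1,4,3,7]))) (Nd (Nd (Lf [7,2,6,1]) (Lf [0,5,2,3])) (Nd (Lf [7,3,4,1]) (Lf [3,6,5,4])))))) (Nd (Nd (Nd (Nd (Nd (Lf [2,7,4,6]) (Lf [0,4,2,1])) (Nd (Lf [4,2,1,7]) (Lf [5,2,0,6]))) (Nd (Nd (Lf [0,5,1,7]) (Lf [1,2,5,6])) (Nd (Lf [5,6,0,2]) (Lf [1,0,3,7])))) (Nd (Nd (Nd (Lf [1,3,5,7]) (Lf [5,0,2,6])) (Nd (Lf [0,3,7,6]) (Lf [1,4,3,5]))) (Nd (Nd (Lf [1,6,4,2]) (Lf [6,4,1,7])) (Nd (Lf [3,4,1,5]) (Lf [7,3,4,0]))))) (Nd (Nd (Nd (Nd (Lf [5,2,4,3]) (Lf [3,7,0,6])) (Nd (Lf [0,3,5,6]) (Lf [5,0,3,7]))) (Nd (Nd (Lf [1,6,0,3]) (Lf [5,1,3,7])) (Nd (Lf [3,4,0,2]) (Lf [1,6,4,7])))) (Nd (Nd (Nd (Lf [7,2,5,6]) (Lf [3,5,4,1])) (Nd (Lf [4,1,2,7]) (Lf [4,2,1,6]))) (Nd (Nd (Lf [0,3,4,7]) (Lf [4,1,3,6])) (Nd (Lf [6,2,5,1]) (Lf [5,2,7,0]))))))) (Nd (Nd (Nd (Nd (Nd (Nd (Lf [5,4,2,6]) (Lf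 [2,4,3,7])) (Nd (Lf [2,5,3,1]) (Lf [2,7,5,6]))) (Nd (Nd (Lf [1,4,0,2]) (Lf [0,7,5,3])) (Nd (Lf [0,2,3,6]) (Lf [1,6,4,7])))) (Nd (Nd (Nd (Lf [1,3,5,7]) (Lf [1,2,3,6])) (Nd (Lf [0,2,4,6]) (Lf [7,5,4,1]))) (Nd (Nd (Lf [6,2,3,0]) (Lf [5,1,4,7])) (Nd (Lf [4,3,5,7]) (Lf [6,1,3,2]))))) (Nd (Nd (Nd (Nd (Lf [1,3,2,4]) (Lf [0,5,1,7])) (Nd (Lf [7,2,6,4]) (Lf [3,0,4,6]))) (Nd (Nd (Lf [1,5,3,0]) (Lf [7,1,2,6])) (Nd (Lf [7,5,4,6]) (Lf [0,4,5,3])))) (Nd (Nd (Nd (Lf [6,2,0,7]) (Lf [4,6,1,0])) (Nd (Lf [1,3,2,7]) (Lf [5,2,3,0]))) (Nd (Nd (Lf [0,4,5,7]) (Lf [5,3,4,1])) (Nd (Lf [6,5,2,7]) (Lf [0,6,2,1])))))) (Nd (Nd (Nd (Nd (Nd (Lf [0,7,1,3]) (Lf [3,0,6,4])) (Nd (Lf [5,7,3,6]) (Lf [1,3,5,0]))) (Nd (Nd (Lf [5,3,4,6]) (Lf [0,7,5,2])) (Nd (Lf [0,3,1,4]) (Lf [2,0,7,6])))) (Nd (Nd (Nd (Lf [7,4,2,6]) (Lf [0,3,1,5])) (Nd (Lf [0,4,1,7]) (Lf [5,2,6,4]))) (Nd (Nd (Lf [7,3,0,5]) (Lf [0,6,4,2]))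 (Nd (Lf [5,2,0,6]) (Lf [7,0,1,4]))))) (Nd (Nd (Nd (Nd (Lf [1,7,4,0]) (Lf [4,2,0,1])) (Nd (Lf [6,1,7,5]) (Lf [4,2,1,6]))) (Nd (Nd (Lf [0,5,2,7]) (Lf [4,3,5,0])) (Nd (Lf [1,2,7,6]) (Lf [6,3,2,5])))) (Nd (Nd (Nd (Lf [6,3,5,1]) (Lf [7,2,5,6])) (Nd (Lf [4,5,3,0]) (Lf [5,3,0,7]))) (Nd (Nd (Lf [6,2,4,1]) (Lf [0,3,2,7])) (Nd (Lf [0,3,4,7]) (Lf [1,4,3,6])))))))) (Nd (Nd (Nd (Nd (Nd (Nd (Nd (Lf [5,2,0,1]) (Lf [4,3,7,0])) (Nd (Lf [1,3,2,6]) (Lf [0,6,4,7]))) (Nd (Nd (Lf [7,6,4,2]) (Lf [0,3,5,4])) (Nd (Lf [0,5,4,1]) (Lf [7,6,5,3])))) (Nd (Nd (Nd (Lf [3,4,7,6]) (Lf [2,5,3,6])) (Nd (Lf [0,2,4,5]) (Lf [1,3,7,5]))) (Nd (Nd (Lf [0,5,2,3]) (Lf [6,7,1,3])) (Nd (Lf [1,3,2,6]) (Lf [1,7,2,4]))))) (Nd (Nd (Nd (Nd (Lf [3,2,6,4]) (Lf [0,4,1,7])) (Nd (Lf [1,2,5,7]) (Lf [0,3,4,6]))) (Nd (Nd (Lf [2,3,5,0]) (Lf [5,6,1,7])) (Nd (Lf [6,2,4,3]) (Lf [5,7,0,2])))) (Nd (Nd (Nd (Lf [7,1,5,0]) (Lf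 [2,1,5,0])) (Nd (Lf [3,2,6,4]) (Lf [0,2,7,6]))) (Nd (Nd (Lf [0,7,4,6]) (Lf [1,6,4,2])) (Nd (Lf [0,5,7,1]) (Lf [4,3,0,5])))))) (Nd (Nd (Nd (Nd (Nd (Lf [0,7,4,6]) (Lf [1,6,5,2])) (Nd (Lf [1,5,0,7]) (Lf [3,4,1,2]))) (Nd (Nd (Lf [6,7,5,1]) (Lf [0,1,4,2])) (Nd (Lf [3,4,2,7]) (Lf [5,2,1,6])))) (Nd (Nd (Nd (Lf [0,5,2,3]) (Lf [7,5,4,1])) (Nd (Lf [4,6,7,5]) (Lf [2,0,3,6]))) (Nd (Nd (Lf [0,3,4,7]) (Lf [6,3,2,0])) (Nd (Lf [3,7,0,6]) (Lf [1,3,4,5]))))) (Nd (Nd (Nd (Nd (Lf [4,5,0,3]) (Lf [7,4,2,3])) (Nd (Lf [1,3,4,6]) (Lf [1,2,7,6]))) (Nd (Nd (Lf [7,3,4,6]) (Lf [3,5,0,2])) (Nd (Lf [1,4,7,5]) (Lf [3,0,6,5])))) (Nd (Nd (Nd (Lf [0,2,1,7]) (Lf [6,0,3,1])) (Nd (Lf [0,6,5,3]) (Lf [5,0,4,7]))) (Nd (Nd (Lf [1,2,5,6]) (Lf [0,4,5,7])) (Nd (Lf [2,1,7,0]) (Lf [1,4,6,2]))))))) (Nd (Nd (Nd (Nd (Nd (Nd (Lf [3,2,0,7]) (Lf [1,0,4,5])) (Nd (Lf [0,2,6,4]) (Lf [1,0,6,7]))) (Nd (Nd (Lf [5,3,4,1])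 (Lf [4,3,1,7])) (Nd (Lf [6,3,5,7]) (Lf [1,0,6,5])))) (Nd (Nd (Nd (Lf [0,4,6,1]) (Lf [3,1,0,7])) (Nd (Lf [3,1,5,7]) (Lf [0,4,2,6]))) (Nd (Nd (Lf [1,3,5,7]) (Lf [5,2,0,6])) (Nd (Lf [6,3,4,0]) (Lf [0,5,4,7]))))) (Nd (Nd (Nd (Nd (Lf [0,1,5,6]) (Lf [5,3,4,7])) (Nd (Lf [0,3,7,2]) (Lf [3,4,1,6]))) (Nd (Nd (Lf [6,1,4,7]) (Lf [0,2,6,4])) (Nd (Lf [1,2,5,0]) (Lf [5,3,1,7])))) (Nd (Nd (Nd (Lf [3,2,4,5]) (Lf [6,2,5,7])) (Nd (Lf [6,4,0,1]) (Lf [1,5,3,7]))) (Nd (Nd (Lf [1,7,6,2]) (Lf [0,3,6,2])) (Nd (Lf [0,5,4,7]) (Lf [1,2,3,4])))))) (Nd (Nd (Nd (Nd (Nd (Lf [1,3,4,6]) (Lf [2,3,4,7])) (Nd (Lf [7,5,4,0]) (Lf [5,4,2,6]))) (Nd (Nd (Lf [0,2,5,7]) (Lf [3,2,5,4])) (Nd (Lf [6,2,3,1]) (Lf [2,3,6,7])))) (Nd (Nd (Nd (Lf [5,2,0,1]) (Lf [7,2,3,6])) (Nd (Lf [5,2,1,6]) (Lf [1,7,0,3]))) (Nd (Nd (Lf [1,2,4,6]) (Lf [1,5,6,7])) (Nd (Lf [1,2,4,7]) (Lf [5,2,3,4]))))) (Nd (Nd (Nd (Nd (Lf [7,2,1,4])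 (Lf [1,2,5,6])) (Nd (Lf [6,4,3,0]) (Lf [0,3,7,2]))) (Nd (Nd (Lf [2,3,5,1]) (Lf [6,7,4,1])) (Nd (Lf [0,5,6,7]) (Lf [1,2,5,0])))) (Nd (Nd (Nd (Lf [6,3,5,0]) (Lf [7,5,0,4])) (Nd (Lf [1,7,2,3]) (Lf [6,4,2,1]))) (Nd (Nd (Lf [0,3,6,4]) (Lf [1,7,3,6])) (Nd (Lf [2,3,5,4]) (Lf [5,0,4,7]))))))))"

lemma look_tab:
  "look T [False,False,False,False,False,False,False,False] = [1,4,6,3]"
  "look T [True,False,False,False,False,False,False,False] = [5,2,0,1]"
  "look T [False,True,False,False,False,False,False,False] = [5,4,2,6]"
  "look T [True,True,False,False,False,False,False,False] = [3,2,0,7]"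
  "look T [False,False,True,False,False,False,False,False] = [2,7,4,6]"
  "look T [True,False,True,False,False,False,False,False] = [0,7,4,6]"
  "look T [False,True,True,False,False,False,False,False] = [0,7,1,3]"
  "look T [True,True,True,False,False,False,False,False] = [1,3,4,6]"
  "look T [False,False,False,True,False,False,False,False] = [0,6,5,7]"
  "look T [True,False,False,True,False,False,False,False] = [3,2,6,4]"
  "look T [False,True,False,True,False,False,False,False] = [1,3,2,4]"
  "look T [True,True,False,True,False,False,False,False] = [0,1,5,6]"
  "look T [False,False,True,True,False,False,False,False] = [5,2,4,3]"
  "look T [True,False,True,True,False,False,False,False] = [4,5,0,3]"
  "look T [False,True,True,True,False,False,False,False] = [1,7,4,0]"
  "look T [True,True,True,True,False,False,False,False] = [7,2,1,4]"
  "look T [False,False,False,False,True,False,False,False] = [0,2,3,6]"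
  "look T [True,False,False,False,True,False,False,False] = [3,4,7,6]"
  "look T [False,True,False,False,True,False,False,False] = [1,3,5,7]"
  "look T [True,True,False,False,True,False,False,False] = [0,4,6,1]"
  "look T [False,False,True,False,True,False,False,False] = [1,3,5,7]"
  "look T [True,False,True,False,True,False,False,False] = [0,5,2,3]"
  "look T [False,True,True,False,True,False,False,False] = [7,4,2,6]"
  "look T [True,True,True,False,True,False,False,False] = [5,2,0,1]"
  "look T [False,False,False,True,True,False,False,False] = [1,6,4,5]"
  "look T [True,False,False,True,True,False,False,False] = [7,1,5,0]"
  "look T [False,True,False,True,True,False,False,False] = [6,2,0,7]"
  "look T [True,True,False,True,True,False,False,False] = [3,2,4,5]"
  "look T [False,False,True,True,True,False,False,False] = [7,2,5,6]"
  "look T [True,False,True,True,True,False,False,False] = [0,2,1,7]"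
  "look T [False,True,True,True,True,False,False,False] = [6,3,5,1]"
  "look T [True,True,True,True,True,False,False,False] = [6,3,5,0]"
  "look T [False,False,False,False,False,True,False,False] = [2,5,0,7]"
  "look T [True,False,False,False,False,True,False,False] = [7,6,4,2]"
  "look T [False,True,False,False,False,True,False,False] = [1,4,0,2]"
  "look T [True,True,False,False,False,True,False,False] = [5,3,4,1]"
  "look T [False,False,True,False,False,True,False,False] = [0,5,1,7]"
  "look T [True,False,True,False,False,True,False,False] = [6,7,5,1]"
  "look T [False,True,True,False,False,True,False,False] = [5,3,4,6]"
  "look T [True,True,True,False,False,True,False,False] = [0,2,5,7]"
  "look T [False,False,False,True,False,True,False,False] = [6,2,4,3]"
  "look T [True,False,False,True,False,True,False,False] = [2,3,5,0]"
  "look T [False,True,False,True,False,True,False,False] = [1,5,3,0]"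
  "look T [True,True,False,True,False,True,False,False] = [6,1,4,7]"
  "look T [False,False,True,True,False,True,False,False] = [1,6,0,3]"
  "look T [True,False,True,True,False,True,False,False] = [7,3,4,6]"
  "look T [False,True,True,True,False,True,False,False] = [0,5,2,7]"
  "look T [True,True,True,True,False,True,False,False] = [2,3,5,1]"
  "look T [False,False,False,False,True,True,False,False] = [1,3,4,5]"
  "look T [True,False,False,False,True,True,False,False] = [0,5,2,3]"
  "look T [False,True,False,False,True,True,False,False] = [6,2,3,0]"
  "look T [True,True,False,False,True,True,False,False] = [1,3,5,7]"
  "look T [False,False,True,False,True,True,False,False] = [1,6,4,2]"
  "look T [True,False,True,False,True,True,False,False] = [0,3,4,7]"
  "look T [False,True,True,False,True,True,False,False] = [7,3,0,5]"
  "look T [True,True,True,False,True,True,False,False] = [1,2,4,6]"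
  "look T [False,False,False,True,True,True,False,False] = [7,2,6,1]"
  "look T [True,False,False,True,True,True,False,False] = [0,7,4,6]"
  "look T [False,True,False,True,True,True,False,False] = [0,4,5,7]"
  "look T [True,True,False,True,True,True,False,False] = [1,7,6,2]"
  "look T [False,False,True,True,True,True,False,False] = [0,3,4,7]"
  "look T [True,False,True,True,True,True,False,False] = [1,2,5,6]"
  "look T [False,True,True,True,True,True,False,False] = [6,2,4,1]"
  "look T [True,True,True,True,True,True,False,False] = [0,3,6,4]"
  "look T [False,False,False,False,False,False,True,False] = [0,5,4,3]"
  "look T [True,False,False,False,False,False,True,False] = [1,3,2,6]"
  "look T [False,True,False,False,False,False,True,False] = [2,5,3,1]"
  "look T [True,True,False,False,False,False,True,False] = [0,2,6,4]"
  "look T [False,False,True,False,False,False,True,False] = [4,2,1,7]"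
  "look T [True,False,True,False,False,False,True,False] = [1,5,0,7]"
  "look T [False,True,True,False,False,False,True,False] = [5,7,3,6]"
  "look T [True,True,True,False,False,False,True,False] = [7,5,4,0]"
  "look T [False,False,False,True,False,False,True,False] = [0,5,2,1]"
  "look T [True,False,False,True,False,False,True,False] = [1,2,5,7]"
  "look T [False,True,False,True,False,False,True,False] = [7,2,6,4]"
  "look T [True,True,False,True,False,False,True,False] = [0,3,7,2]"
  "look T [False,False,True,True,False,False,True,False] = [0,3,5,6]"
  "look T [True,False,True,True,False,False,True,False] = [1,3,4,6]"
  "look T [False,True,True,True,False,False,True,False] = [6,1,7,5]"
  "look T [True,True,True,True,False,False,True,False] = [6,4,3,0]"
  "look T [False,False,False,False,True,False,True,False] = [7,2,5,1]"
  "look T [True,False,False,False,True,False,True,False] = [0,2,4,5]"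
  "look T [False,True,False,False,True,False,True,False] = [0,2,4,6]"
  "look T [True,True,False,False,True,False,True,False] = [3,1,5,7]"
  "look T [False,False,True,False,True,False,True,False] = [0,3,7,6]"
  "look T [True,False,True,False,True,False,True,False] = [4,6,7,5]"
  "look T [False,True,True,False,True,False,True,False] = [0,4,1,7]"
  "look T [True,True,True,False,True,False,True,False] = [5,2,1,6]"
  "look T [False,False,False,True,True,False,True,False] = [0,3,4,5]"
  "look T [True,False,False,True,True,False,True,False] = [3,2,6,4]"
  "look T [False,True,False,True,True,False,True,False] = [1,3,2,7]"
  "look T [True,True,False,True,True,False,True,False] = [6,4,0,1]"
  "look T [False,False,True,True,True,False,True,False] = [4,1,2,7]"
  "look T [True,False,True,True,True,False,True,False] = [0,6,5,3]"
  "look T [False,True,True,True,True,False,True,False] = [4,5,3,0]"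
  "look T [True,True,True,True,True,False,True,False] = [1,7,2,3]"
  "look T [False,False,False,False,False,True,True,False] = [4,6,1,7]"
  "look T [True,False,False,False,False,True,True,False] = [0,5,4,1]"
  "look T [False,True,False,False,False,True,True,False] = [0,2,3,6]"
  "look T [True,True,False,False,False,True,True,False] = [6,3,5,7]"
  "look T [False,False,True,False,False,True,True,False] = [5,6,0,2]"
  "look T [True,False,True,False,False,True,True,False] = [3,4,2,7]"
  "look T [False,True,True,False,False,True,True,False] = [0,3,1,4]"
  "look T [True,True,True,False,False,True,True,False] = [6,2,3,1]"
  "look T [False,False,False,True,False,True,True,False] = [1,7,3,0]"
  "look T [True,False,False,True,False,True,True,False] = [6,2,4,3]"
  "look T [False,True,False,True,False,True,True,False] = [7,5,4,6]"
  "look T [True,True,False,True,False,True,True,False] = [1,2,5,0]"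
  "look T [False,False,True,True,False,True,True,False] = [3,4,0,2]"
  "look T [True,False,True,True,False,True,True,False] = [1,4,7,5]"
  "look T [False,True,True,True,False,True,True,False] = [1,2,7,6]"
  "look T [True,True,True,True,False,True,True,False] = [0,5,6,7]"
  "look T [False,False,False,False,True,True,True,False] = [0,6,1,2]"
  "look T [True,False,False,False,True,True,True,False] = [1,3,2,6]"
  "look T [False,True,False,False,True,True,True,False] = [4,3,5,7]"
  "look T [True,True,False,False,True,True,True,False] = [6,3,4,0]"
  "look T [False,False,True,False,True,True,True,False] = [3,4,1,5]"
  "look T [True,False,True,False,True,True,True,False] = [3,7,0,6]"
  "look T [False,True,True,False,True,True,True,False] = [5,2,0,6]"
  "look T [True,True,True,False,True,True,True,False] = [1,2,4,7]"
  "look T [False,False,False,True,True,True,True,False] = [7,3,4,1]"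
  "look T [True,False,False,True,True,True,True,False] = [0,5,7,1]"
  "look T [False,True,False,True,True,True,True,False] = [6,5,2,7]"
  "look T [True,True,False,True,True,True,True,False] = [0,5,4,7]"
  "look T [False,False,True,True,True,True,True,False] = [6,2,5,1]"
  "look T [True,False,True,True,True,True,True,False] = [2,1,7,0]"
  "look T [False,True,True,True,True,True,True,False] = [0,3,4,7]"
  "look T [True,True,True,True,True,True,True,False] = [2,3,5,4]"
  "look T [False,False,False,False,False,False,False,True] = [1,3,5,7]"
  "look T [True,False,False,False,False,False,False,True] = [4,3,7,0]"
  "look T [False,True,False,False,False,False,False,True] = [2,4,3,7]"
  "look T [True,True,False,False,False,False,False,True] = [1,0,4,5]"
  "look T [False,False,True,False,False,False,False,True] = [0,4,2,1]"
  "look T [True,False,True,False,False,False,False,True] = [1,6,5,2]"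
  "look T [False,True,True,False,False,False,False,True] = [3,0,6,4]"
  "look T [True,True,True,False,False,False,False,True] = [2,3,4,7]"
  "look T [False,False,False,True,False,False,False,True] = [4,2,5,6]"
  "look T [True,False,False,True,False,False,False,True] = [0,4,1,7]"
  "look T [False,True,False,True,False,False,False,True] = [0,5,1,7]"
  "look T [True,True,False,True,False,False,False,True] = [5,3,4,7]"
  "look T [False,False,True,True,False,False,False,True] = [3,7,0,6]"
  "look T [True,False,True,True,False,False,False,True] = [7,4,2,3]"
  "look T [False,True,True,True,False,False,False,True] = [4,2,0,1]"
  "look T [True,True,True,True,False,False,False,True] = [1,2,5,6]"
  "look T [False,False,False,False,True,False,False,True] = [4,6,7,0]"
  "look T [True,False,False,False,True,False,False,True] = [2,5,3,6]"
  "look T [False,True,False,False,True,False,False,True] = [1,2,3,6]"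
  "look T [True,True,False,False,True,False,False,True] = [3,1,0,7]"
  "look T [False,False,True,False,True,False,False,True] = [5,0,2,6]"
  "look T [True,False,True,False,True,False,False,True] = [7,5,4,1]"
  "look T [False,True,True,False,True,False,False,True] = [0,3,1,5]"
  "look T [True,True,True,False,True,False,False,True] = [7,2,3,6]"
  "look T [False,False,False,True,True,False,False,True] = [7,3,2,6]"
  "look T [True,False,False,True,True,False,False,True] = [2,1,5,0]"
  "look T [False,True,False,True,True,False,False,True] = [4,6,1,0]"
  "look T [True,True,False,True,True,False,False,True] = [6,2,5,7]"
  "look T [False,False,True,True,True,False,False,True] = [3,5,4,1]"
  "look T [True,False,True,True,True,False,False,True] = [6,0,3,1]"
  "look T [False,True,True,True,True,False,False,True] = [7,2,5,6]"
  "look T [True,True,True,True,True,False,False,True] = [7,5,0,4]"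
  "look T [False,False,False,False,False,True,False,True] = [1,6,4,3]"
  "look T [True,False,False,False,False,True,False,True] = [0,3,5,4]"
  "look T [False,True,False,False,False,True,False,True] = [0,7,5,3]"
  "look T [True,True,False,False,False,True,False,True] = [4,3,1,7]"
  "look T [False,False,True,False,False,True,False,True] = [1,2,5,6]"
  "look T [True,False,True,False,False,True,False,True] = [0,1,4,2]"
  "look T [False,True,True,False,False,True,False,True] = [0,7,5,2]"
  "look T [True,True,True,False,False,True,False,True] = [3,2,5,4]"
  "look T [False,False,False,True,False,True,False,True] = [0,7,4,2]"
  "look T [True,False,False,True,False,True,False,True] = [5,6,1,7]"
  "look T [False,True,False,True,False,True,False,True] = [7,1,2,6]"
  "look T [True,True,False,True,False,True,False,True] = [0,2,6,4]"
  "look T [False,False,True,True,False,True,False,True] = [5,1,3,7]"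
  "look T [True,False,True,True,False,True,False,True] = [3,5,0,2]"
  "look T [False,True,True,True,False,True,False,True] = [4,3,5,0]"
  "look T [True,True,True,True,False,True,False,True] = [6,7,4,1]"
  "look T [False,False,False,False,True,True,False,True] = [0,2,7,5]"
  "look T [True,False,False,False,True,True,False,True] = [6,7,1,3]"
  "look T [False,True,False,False,True,True,False,True] = [5,1,4,7]"
  "look T [True,True,False,False,True,True,False,True] = [5,2,0,6]"
  "look T [False,False,True,False,True,True,False,True] = [6,4,1,7]"
  "look T [True,False,True,False,True,True,False,True] = [6,3,2,0]"
  "look T [False,True,True,False,True,True,False,True] = [0,6,4,2]"
  "look T [True,True,True,False,True,True,False,True] = [1,5,6,7]"
  "look T [False,False,False,True,True,True,False,True] = [0,5,2,3]"
  "look T [True,False,False,True,True,True,False,True] = [1,6,4,2]"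
  "look T [False,True,False,True,True,True,False,True] = [5,3,4,1]"
  "look T [True,True,False,True,True,True,False,True] = [0,3,6,2]"
  "look T [False,False,True,True,True,True,False,True] = [4,1,3,6]"
  "look T [True,False,True,True,True,True,False,True] = [0,4,5,7]"
  "look T [False,True,True,True,True,True,False,True] = [0,3,2,7]"
  "look T [True,True,True,True,True,True,False,True] = [1,7,3,6]"
  "look T [False,False,False,False,False,False,True,True] = [7,6,5,1]"
  "look T [True,False,False,False,False,False,True,True] = [0,6,4,7]"
  "look T [False,True,False,False,False,False,True,True] = [2,7,5,6]"
  "look T [True,True,False,False,False,False,True,True] = [1,0,6,7]"
  "look T [False,False,True,False,False,False,True,True] = [5,2,0,6]"
  "look T [True,False,True,False,False,False,True,True] = [3,4,1,2]"
  "look T [False,True,True,False,False,False,True,True] = [1,3,5,0]"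
  "look T [True,True,True,False,False,False,True,True] = [5,4,2,6]"
  "look T [False,False,False,True,False,False,True,True] = [7,2,3,1]"
  "look T [True,False,False,True,False,False,True,True] = [0,3,4,6]"
  "look T [False,True,False,True,False,False,True,True] = [3,0,4,6]"
  "look T [True,True,False,True,False,False,True,True] = [3,4,1,6]"
  "look T [False,False,True,True,False,False,True,True] = [5,0,3,7]"
  "look T [True,False,True,True,False,False,True,True] = [1,2,7,6]"
  "look T [False,True,True,True,False,False,True,True] = [4,2,1,6]"
  "look T [True,True,True,True,False,False,True,True] = [0,3,7,2]"
  "look T [False,False,False,False,True,False,True,True] = [2,0,5,4]"
  "look T [True,False,False,False,True,False,True,True] = [1,3,7,5]"
  "look T [False,True,False,False,True,False,True,True] = [7,5,4,1]"
  "look T [True,True,False,False,True,False,True,True] = [0,4,2,6]"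
  "look T [False,False,True,False,True,False,True,True] = [1,4,3,5]"
  "look T [True,False,True,False,True,False,True,True] = [2,0,3,6]"
  "look T [False,True,True,False,True,False,True,True] = [5,2,6,4]"
  "look T [True,True,True,False,True,False,True,True] = [1,7,0,3]"
  "look T [False,False,False,True,True,False,True,True] = [1,4,3,7]"
  "look T [True,False,False,True,True,False,True,True] = [0,2,7,6]"
  "look T [False,True,False,True,True,False,True,True] = [5,2,3,0]"
  "look T [True,True,False,True,True,False,True,True] = [1,5,3,7]"
  "look T [False,False,True,True,True,False,True,True] = [4,2,1,6]"
  "look T [True,False,True,True,True,False,True,True] = [5,0,4,7]"
  "look T [False,True,True,True,True,False,True,True] = [5,3,0,7]"
  "look T [True,True,True,True,True,False,True,True] = [6,4,2,1]"
  "look T [False,False,False,False,False,True,True,True] = [3,2,0,4]"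
  "look T [True,False,False,False,False,True,True,True] = [7,6,5,3]"
  "look T [False,True,False,False,False,True,True,True] = [1,6,4,7]"
  "look T [True,True,False,False,False,True,True,True] = [1,0,6,5]"
  "look T [False,False,True,False,False,True,True,True] = [1,0,3,7]"
  "look T [True,False,True,False,False,True,True,True] = [5,2,1,6]"
  "look T [False,True,True,False,False,True,True,True] = [2,0,7,6]"
  "look T [True,True,True,False,False,True,True,True] = [2,3,6,7]"
  "look T [False,False,False,True,False,True,True,True] = [6,1,5,2]"
  "look T [True,False,False,True,False,True,True,True] = [5,7,0,2]"
  "look T [False,True,False,True,False,True,True,True] = [0,4,5,3]"
  "look T [True,True,False,True,False,True,True,True] = [5,3,1,7]"
  "look T [False,False,True,True,False,True,True,True] = [1,6,4,7]"
  "look T [True,False,True,True,False,True,True,True] = [3,0,6,5]"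
  "look T [False,True,True,True,False,True,True,True] = [6,3,2,5]"
  "look T [True,True,True,True,False,True,True,True] = [1,2,5,0]"
  "look T [False,False,False,False,True,True,True,True] = [6,2,0,7]"
  "look T [True,False,False,False,True,True,True,True] = [1,7,2,4]"
  "look T [False,True,False,False,True,True,True,True] = [6,1,3,2]"
  "look T [True,True,False,False,True,True,True,True] = [0,5,4,7]"
  "look T [False,False,True,False,True,True,True,True] = [7,3,4,0]"
  "look T [True,False,True,False,True,True,True,True] = [1,3,4,5]"
  "look T [False,True,True,False,True,True,True,True] = [7,0,1,4]"
  "look T [True,True,True,False,True,True,True,True] = [5,2,3,4]"
  "look T [False,False,False,True,True,True,True,True] = [3,6,5,4]"
  "look T [True,False,False,True,True,True,True,True] = [4,3,0,5]"
  "look T [False,True,False,True,True,True,True,True] = [0,6,2,1]"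
  "look T [True,True,False,True,True,True,True,True] = [1,2,3,4]"
  "look T [False,False,True,True,True,True,True,True] = [5,2,7,0]"
  "look T [True,False,True,True,True,True,True,True] = [1,4,6,2]"
  "look T [False,True,True,True,True,True,True,True] = [1,4,3,6]"
  "look T [True,True,True,True,True,True,True,True] = [5,0,4,7]"
  by (simp_all only: T_def look.simps if_True if_False)

definition D :: "nat \<Rightarrow> bool list \<Rightarrow> nat" where "D s v = look T v ! s"
definition succ :: "nat \<Rightarrow> bool list \<Rightarrow> bool list" where "succ s v = flip v (D s v)"

definition chk :: "bool list \<Rightarrow> bool" where
 "chk v \<longleftrightarrow> list_all (\<lambda>s. D s v < 8) [0,1,2,3]
   \<and> distinct (map (\<lambda>s. D s v) [0,1,2,3])
   \<and> list_all (\<lambda>s. list_all (\<lambda>t. D t (succ s v) \<noteq> D s v) [0,1,2,3]) [0,1,2,3]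
   \<and> list_all (\<lambda>d. list_ex (\<lambda>s. D s v = d) [0,1,2,3] \<or> list_ex (\<lambda>s. D s (flip v d) = d) [0,1,2,3]) [0,1,2,3,4,5,6,7]
   \<and> list_all (\<lambda>s. length (filter (\<lambda>d. D s (flip v d) = d) [0,1,2,3,4,5,6,7]) \<le> 1) [0,1,2,3]"

fun pth :: "nat \<Rightarrow> bool list \<Rightarrow> nat \<Rightarrow> bool list" where
  "pth k v 0 = v"
| "pth k v (Suc j) = succ (4 - k + j) (pth k v j)"

lemma pth_num: "pth k v n = (if n = 0 then v else succ (4 - k + (n - 1)) (pth k v (n - 1)))"
  by (cases n) auto

fun orb :: "('a \<Rightarrow> 'a) \<Rightarrow> 'a \<Rightarrow> 'a \<Rightarrow> nat \<Rightarrow> bool" where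
  "orb f x0 x 0 = (x = x0)"
| "orb f x0 x (Suc n) = (x \<noteq> x0 \<and> orb f x0 (f x) n)"

lemma orb_num: "orb f x0 x n = (if n = 0 then x = x0 else x \<noteq> x0 \<and> orb f x0 (f x) (n - 1))"
  by (cases n) auto

lemma len8: "length v = 8 \<Longrightarrow> v = [v!0,v!1,v!2,v!3,v!4,v!5,v!6,v!7]"
proof -
  assume "length v = 8"
  hence "v = map ((!) v) [0..<8]" by (metis map_nth)
  thus ?thesis by (simp add: upt_rec eval_nat_numeral)
qed

lemma all_V: "(\<forall>v\<in>Q8_verts. P v) \<longleftrightarrow> (\<forall>b0 b1 b2 b3 b4 b5 b6 b7. P [b0,b1,b2,b3,b4,b5,b6,b7])"
proof
  assume "\<forall>v\<in>Q8_verts. P v" thus "\<forall>b0 b1 b2 b3 b4 b5 b6 b7. P [b0,b1,b2,b3,b4,b5,b6,b7]"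
    by (simp add: Q8_verts_def)
next
  assume H: "\<forall>b0 b1 b2 b3 b4 b5 b6 b7. P [b0,b1,b2,b3,b4,b5,b6,b7]"
  show "\<forall>v\<in>Q8_verts. P v"
  proof
    fix v assume "v \<in> Q8_verts"
    hence "v = [v!0,v!1,v!2,v!3,v!4,v!5,v!6,v!7]" by (intro len8) (simp add: Q8_verts_def)
    thus "P v" using H by metis
  qed
qed

fun allv :: "nat \<Rightarrow> bool list list" where
  "allv 0 = [[]]"
| "allv (Suc n) = concat (map (\<lambda>xs. [False # xs, True # xs]) (allv n))"

lemma allv_num: "allv n = (if n = 0 then [[]] else concat (map (\<lambda>xs. [False # xs, True # xs]) (allv (n - 1))))"
  by (cases n) auto

lemma set_allv: "set (allv n) = {xs. length xs = n}"
proof (induction n)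
  case 0 thus ?case by auto
next
  case (Suc n)
  show ?case
  proof (intro set_eqI iffI)
    fix xs assume "xs \<in> set (allv (Suc n))" thus "xs \<in> {xs. length xs = Suc n}" using Suc by auto
  next
    fix xs :: "bool list" assume "xs \<in> {xs. length xs = Suc n}"
    then obtain b ys where "xs = b # ys" "length ys = n" by (cases xs) auto
    thus "xs \<in> set (allv (Suc n))" using Suc by (cases b) auto
  qed
qed

lemma V_allv: "(\<forall>v\<in>Q8_verts. P v) \<longleftrightarrow> list_all P (allv 8)"
  by (simp add: list_all_iff set_allv Q8_verts_def)

lemma chk_all: "\<forall>v\<in>Q8_verts. chk v"
  unfolding V_allv
  by (simp add: allv_num chk_def D_def look_tab succ_def flip_ev)

lemma flip_len[simp]: "length (flip v d) = length v"
  by (induction v arbitrary: d) (auto simp: flip_Cons)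

lemma flip_nth: "i < length v \<Longrightarrow> flip v d ! i = (if i = d then \<not> v!i else v!i)"
proof (induction v arbitrary: d i)
  case Nil thus ?case by simp
next
  case (Cons b bs)
  show ?case using Cons by (cases i) (auto simp: flip_Cons)
qed

lemma flip_flip[simp]: "flip (flip v d) d = v"
  by (rule nth_equalityI) (auto simp: flip_nth)

lemma flip_eqD: "length v = 8 \<Longrightarrow> d1 < 8 \<Longrightarrow> d2 < 8 \<Longrightarrow> flip v d1 = flip v d2 \<Longrightarrow> d1 = d2"
proof (rule ccontr)
  assume a: "length v = 8" "d1 < 8" "d2 < 8" "flip v d1 = flip v d2" "d1 \<noteq> d2"
  have "flip v d1 ! d1 = (\<not> v ! d1)" using a(1-3) by (simp add: flip_nth)
  moreover have "flip v d2 ! d1 = v ! d1" using a(1-3,5) by (simp add: flip_nth)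
  ultimately show False using a(4) by simp
qed

lemma adj_flip: "length v = 8 \<Longrightarrow> d < 8 \<Longrightarrow> Q8_adj v (flip v d)"
proof -
  assume a: "length v = 8" "d < 8"
  have "{i. i < 8 \<and> v ! i \<noteq> flip v d ! i} = {d}" using a by (auto simp: flip_nth split: if_splits)
  thus ?thesis using a by (simp add: Q8_adj_def)
qed

lemma adj_ex: "Q8_adj u w \<Longrightarrow> \<exists>d<8. w = flip u d"
proof -
  assume a: "Q8_adj u w"
  hence l: "length u = 8" "length w = 8" and c: "card {i. i < 8 \<and> u ! i \<noteq> w ! i} = 1"
    by (auto simp: Q8_adj_def)
  from c obtain d where d: "{i. i < 8 \<and> u ! i \<noteq> w ! i} = {d}" by (auto simp: card_Suc_eq)
  hence "d < 8" by auto
  moreover have "w = flip u d"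
  proof (rule nth_equalityI)
    show "length w = length (flip u d)" using l by simp
    fix i assume "i < length w"
    thus "w ! i = flip u d ! i" using d l by (auto simp: flip_nth)
  qed
  ultimately show ?thesis by blast
qed

lemma finV: "finite Q8_verts"
proof -
  have "Q8_verts = {xs. set xs \<subseteq> (UNIV::bool set) \<and> length xs = 8}" by (auto simp: Q8_verts_def)
  thus ?thesis using finite_lists_length_eq[of "UNIV::bool set" 8] by simp
qed

lemma cardV: "card Q8_verts = 256"
proof -
  have "Q8_verts = {xs. set xs \<subseteq> (UNIV::bool set) \<and> length xs = 8}" by (auto simp: Q8_verts_def)
  thus ?thesis using card_lists_length_eq[of "UNIV::bool set" 8] by simp
qed

lemma set4: "s < 4 \<longleftrightarrow> s \<in> set [0,1,2,3::nat]" by auto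
lemma set8: "s < 8 \<longleftrightarrow> s \<in> set [0,1,2,3,4,5,6,7::nat]" by auto

lemma succ_V: "v \<in> Q8_verts \<Longrightarrow> succ s v \<in> Q8_verts"
  by (simp add: succ_def Q8_verts_def)

lemma K1: "v \<in> Q8_verts \<Longrightarrow> s < 4 \<Longrightarrow> D s v < 8"
  using chk_all by (auto simp: chk_def list_all_iff set4)

lemma K2: "v \<in> Q8_verts \<Longrightarrow> s < 4 \<Longrightarrow> t < 4 \<Longrightarrow> D s v = D t v \<Longrightarrow> s = t"
proof -
  assume a: "v \<in> Q8_verts" "s < 4" "t < 4" "D s v = D t v"
  hence "distinct (map (\<lambda>s. D s v) [0,1,2,3])" using chk_all by (auto simp: chk_def)
  hence "inj_on (\<lambda>s. D s v) (set [0,1,2,3])" by (simp only: distinct_map)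
  thus ?thesis using a unfolding set4 by (auto dest: inj_onD)
qed

lemma K3: "v \<in> Q8_verts \<Longrightarrow> s < 4 \<Longrightarrow> t < 4 \<Longrightarrow> D t (succ s v) \<noteq> D s v"
  using chk_all by (auto simp: chk_def list_all_iff set4)

lemma K4: "v \<in> Q8_verts \<Longrightarrow> d < 8 \<Longrightarrow> (\<exists>s<4. D s v = d) \<or> (\<exists>s<4. D s (flip v d) = d)"
proof -
  assume a: "v \<in> Q8_verts" "d < 8"
  have "(\<exists>s\<in>set [0,1,2,3]. D s v = d) \<or> (\<exists>s\<in>set [0,1,2,3]. D s (flip v d) = d)"
    using chk_all a unfolding chk_def list_all_iff list_ex_iff set8 by blast
  thus ?thesis unfolding set4 by blast
qed

lemma K5: "v \<in> Q8_verts \<Longrightarrow> s < 4 \<Longrightarrow> d1 < 8 \<Longrightarrow> d2 < 8 \<Longrightarrow> D s (flip v d1) = d1 \<Longrightarrow> D s (flip v d2) = d2 \<Longrightarrow> d1 = d2"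
proof (rule ccontr)
  assume a: "v \<in> Q8_verts" "s < 4" "d1 < 8" "d2 < 8" "D s (flip v d1) = d1" "D s (flip v d2) = d2" "d1 \<noteq> d2"
  let ?L = "filter (\<lambda>d. D s (flip v d) = d) [0,1,2,3,4,5,6,7]"
  have "length ?L \<le> 1" using chk_all a(1,2) unfolding chk_def list_all_iff set4 by blast
  moreover have "{d1, d2} \<subseteq> set ?L" using a unfolding set8 by auto
  hence "card {d1,d2} \<le> card (set ?L)" by (intro card_mono) auto
  hence "2 \<le> card (set ?L)" using a(7) by simp
  moreover have "card (set ?L) \<le> length ?L" by (rule card_length)
  ultimately show False by simp
qed

lemma A_inj:
  assumes "v \<in> Q8_verts" "w \<in> Q8_verts" "s < 4" "t < 4" "{v, succ s v} = {w, succ t w}"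
  shows "v = w \<and> s = t"
proof -
  have lv: "length v = 8" using assms(1) by (simp add: Q8_verts_def)
  have lw: "length w = 8" using assms(2) by (simp add: Q8_verts_def)
  consider "v = w" "succ s v = succ t w" | "v = succ t w" "succ s v = w"
    using assms(5) by (auto simp: doubleton_eq_iff)
  thus ?thesis
  proof cases
    case 1
    hence "flip v (D s v) = flip v (D t v)" by (simp add: succ_def)
    hence "D s v = D t v" using flip_eqD[OF lv] K1 assms by auto
    thus ?thesis using K2 assms 1 by auto
  next
    case 2
    hence "w = flip v (D t w)" by (simp add: succ_def)
    hence "flip v (D s v) = flip v (D t w)" using 2 by (simp add: succ_def)
    hence "D s v = D t w" using flip_eqD[OF lv] K1 assms by auto
    hence "D t (succ s v) = D s v" using 2 by simp
    thus ?thesis using K3 assms by auto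
  qed
qed

lemma succ_inj: "v \<in> Q8_verts \<Longrightarrow> w \<in> Q8_verts \<Longrightarrow> s < 4 \<Longrightarrow> succ s v = succ s w \<Longrightarrow> v = w"
proof -
  assume a: "v \<in> Q8_verts" "w \<in> Q8_verts" "s < 4" "succ s v = succ s w"
  define u where "u = succ s v"
  have uV: "u \<in> Q8_verts" using a by (simp add: u_def succ_V)
  have v: "v = flip u (D s v)" by (simp add: u_def succ_def)
  have w: "w = flip u (D s w)" using a by (simp add: u_def succ_def)
  have "D s (flip u (D s v)) = D s v" using v by simp
  moreover have "D s (flip u (D s w)) = D s w" using w by simp
  ultimately have "D s v = D s w" using K5[OF uV a(3)] K1 a by auto
  thus ?thesis using v w by simp
qed

lemma succ_img: "s < 4 \<Longrightarrow> succ s ` Q8_verts = Q8_verts"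
  by (rule endo_inj_surj[OF finV]) (auto simp: succ_V inj_on_def intro: succ_inj)

lemma succ_adj: "v \<in> Q8_verts \<Longrightarrow> s < 4 \<Longrightarrow> Q8_adj v (succ s v)"
  unfolding succ_def by (rule adj_flip) (auto simp: Q8_verts_def K1)

lemma funpow_V: "v \<in> Q8_verts \<Longrightarrow> (succ s ^^ i) v \<in> Q8_verts"
  by (induction i) (auto simp: succ_V)

lemma funpow_cancel: "s < 4 \<Longrightarrow> x \<in> Q8_verts \<Longrightarrow> y \<in> Q8_verts \<Longrightarrow> (succ s ^^ i) x = (succ s ^^ i) y \<Longrightarrow> x = y"
proof (induction i)
  case 0 thus ?case by simp
next
  case (Suc i)
  hence "(succ s ^^ i) x = (succ s ^^ i) y"
    using succ_inj[of "(succ s ^^ i) x" "(succ s ^^ i) y" s] funpow_V by auto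
  thus ?case using Suc by blast
qed

lemma orb_iff: "orb f x0 x n \<longleftrightarrow> (\<forall>i<n. (f ^^ i) x \<noteq> x0) \<and> (f ^^ n) x = x0"
proof (induction n arbitrary: x)
  case 0 thus ?case by simp
next
  case (Suc n)
  have "(\<forall>i<Suc n. (f ^^ i) x \<noteq> x0) \<longleftrightarrow> x \<noteq> x0 \<and> (\<forall>i<n. (f ^^ i) (f x) \<noteq> x0)"
    by (auto simp: less_Suc_eq_0_disj funpow_swap1)
  moreover have "(f ^^ Suc n) x = (f ^^ n) (f x)" by (simp add: funpow_swap1)
  ultimately show ?case using Suc by simp
qed

definition v0 :: "bool list" where "v0 = [False,False,False,False,False,False,False,False]"

lemma v0V: "v0 \<in> Q8_verts" by (simp add: v0_def Q8_verts_def)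

lemma ham:
  assumes s: "s < 4" and o: "orb (succ s) v0 (succ s v0) 255"
  shows "hamiltonian_cycle Q8_verts Q8_adj {{v, succ s v} | v. v \<in> Q8_verts}"
proof -
  define c where "c i = (succ s ^^ i) v0" for i
  from o have o1: "\<And>i. 0 < i \<Longrightarrow> i < 256 \<Longrightarrow> c i \<noteq> v0" and o2: "c 256 = v0"
  proof -
    from o[unfolded orb_iff] have A: "\<forall>i<255. (succ s ^^ i) (succ s v0) \<noteq> v0"
      and B: "(succ s ^^ 255) (succ s v0) = v0" by auto
    have "(succ s ^^ 256) v0 = (succ s ^^ Suc 255) v0" by simp
    also have "\<dots> = (succ s ^^ 255) (succ s v0)" by (simp only: funpow_Suc_right comp_def)
    finally show "c 256 = v0" using B by (simp add: c_def)
    fix i :: nat assume "0 < i" "i < 256"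
    then obtain j where j: "i = Suc j" "j < 255" by (cases i) auto
    have "c i = (succ s ^^ j) (succ s v0)" unfolding c_def j(1) by (simp only: funpow_Suc_right comp_def)
    thus "c i \<noteq> v0" using A j by simp
  qed
  have cV: "c i \<in> Q8_verts" for i by (simp add: c_def funpow_V v0V)
  have inj: "inj_on c {..<256}"
  proof (rule inj_onI)
    fix i j assume ij: "i \<in> {..<256}" "j \<in> {..<256}" "c i = c j"
    show "i = j"
    proof (rule ccontr)
      assume "i \<noteq> j"
      then consider "i < j" | "j < i" by linarith
      thus False
      proof cases
        case 1
        have "(succ s ^^ i) ((succ s ^^ (j - i)) v0) = (succ s ^^ (i + (j - i))) v0"
          by (simp add: funpow_add)
        also have "\<dots> = (succ s ^^ j) v0" using 1 by simp
        also have "\<dots> = (succ s ^^ i) v0" using ij by (simp add: c_def)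
        finally have "(succ s ^^ i) ((succ s ^^ (j - i)) v0) = (succ s ^^ i) v0" .
        hence "c (j - i) = v0" unfolding c_def
          using funpow_cancel[OF s] funpow_V v0V by blast
        moreover have "0 < j - i" "j - i < 256" using ij 1 by auto
        ultimately show False using o1 by blast
      next
        case 2
        have "(succ s ^^ j) ((succ s ^^ (i - j)) v0) = (succ s ^^ (j + (i - j))) v0"
          by (simp add: funpow_add)
        also have "\<dots> = (succ s ^^ i) v0" using 2 by simp
        also have "\<dots> = (succ s ^^ j) v0" using ij by (simp add: c_def)
        finally have "(succ s ^^ j) ((succ s ^^ (i - j)) v0) = (succ s ^^ j) v0" .
        hence "c (i - j) = v0" unfolding c_def
          using funpow_cancel[OF s] funpow_V v0V by blast
        moreover have "0 < i - j" "i - j < 256" using ij 2 by auto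
        ultimately show False using o1 by blast
      qed
    qed
  qed
  have img: "c ` {..<256} = Q8_verts"
  proof (rule card_subset_eq[OF finV])
    show "c ` {..<256} \<subseteq> Q8_verts" using cV by auto
    show "card (c ` {..<256}) = card Q8_verts" using inj by (simp add: card_image cardV)
  qed
  have bij: "bij_betw c {..<card Q8_verts} Q8_verts" using inj img by (simp add: bij_betw_def cardV)
  have nxt: "c ((i + 1) mod 256) = succ s (c i)" if "i < 256" for i
  proof (cases "i = 255")
    case True
    have "succ s (c 255) = c (Suc 255)" by (simp only: c_def funpow.simps comp_apply)
    thus ?thesis using o2 True by (simp add: c_def)
  next
    case False thus ?thesis using that by (simp add: c_def)
  qed
  show ?thesis unfolding hamiltonian_cycle_def
  proof (intro exI conjI allI impI)
    show "bij_betw c {..<card Q8_verts} Q8_verts" by (rule bij)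
    fix i assume "i < card Q8_verts"
    thus "Q8_adj (c i) (c ((i + 1) mod card Q8_verts))" using nxt succ_adj cV s by (simp add: cardV)
  next
    show "{{v, succ s v} |v. v \<in> Q8_verts} = {{c i, c ((i + 1) mod card Q8_verts)} |i. i < card Q8_verts}"
    proof (intro set_eqI iffI)
      fix e assume "e \<in> {{v, succ s v} |v. v \<in> Q8_verts}"
      then obtain v where "v \<in> Q8_verts" "e = {v, succ s v}" by auto
      then obtain i where "i < 256" "v = c i" using img by force
      thus "e \<in> {{c i, c ((i + 1) mod card Q8_verts)} |i. i < card Q8_verts}"
        using nxt \<open>e = _\<close> by (auto simp: cardV)
    next
      fix e assume "e \<in> {{c i, c ((i + 1) mod card Q8_verts)} |i. i < card Q8_verts}"
      then obtain i where "i < 256" "e = {c i, c ((i + 1) mod 256)}" by (auto simp: cardV)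
      thus "e \<in> {{v, succ s v} |v. v \<in> Q8_verts}" using nxt cV by auto
    qed
  qed
qed

lemma pth_V: "v \<in> Q8_verts \<Longrightarrow> pth k v j \<in> Q8_verts"
  by (induction j) (auto simp: succ_V)

lemma pth_inj: "k \<le> 4 \<Longrightarrow> j \<le> k \<Longrightarrow> v \<in> Q8_verts \<Longrightarrow> w \<in> Q8_verts \<Longrightarrow> pth k v j = pth k w j \<Longrightarrow> v = w"
proof (induction j)
  case 0 thus ?case by simp
next
  case (Suc j)
  have "4 - k + j < 4" using Suc by auto
  hence "pth k v j = pth k w j" using Suc succ_inj pth_V by auto
  thus ?case using Suc by auto
qed

lemma pth_img: "k \<le> 4 \<Longrightarrow> j \<le> k \<Longrightarrow> (\<lambda>v. pth k v j) ` Q8_verts = Q8_verts"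
  by (rule endo_inj_surj[OF finV]) (auto simp: pth_V inj_on_def intro: pth_inj)

lemma pth_edge: "1 \<le> j \<Longrightarrow> path_edge (pth k v) j = {pth k v (j - 1), succ (4 - k + (j - 1)) (pth k v (j - 1))}"
  by (cases j) (auto simp: path_edge_def)

lemma main:
  assumes k: "k \<le> 4"
    and dist: "\<forall>v\<in>Q8_verts. distinct (map (pth k v) [0..<Suc k])"
    and hamo: "\<forall>s<4. orb (succ s) v0 (succ s v0) 255"
  shows "\<exists>(p :: bool list \<Rightarrow> nat \<Rightarrow> bool list) (H :: nat \<Rightarrow> bool list set set).
    is_DVOP Q8_verts Q8_adj k p \<and>
    (\<forall>i < 4 - k. hamiltonian_cycle Q8_verts Q8_adj (H i)) \<and>
    (\<forall>i < 4 - k. DVOP_edges Q8_verts k p \<inter> H i = {}) \<and>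
    (\<forall>i < 4 - k. \<forall>j < 4 - k. i \<noteq> j \<longrightarrow> H i \<inter> H j = {}) \<and>
    DVOP_edges Q8_verts k p \<union> (\<Union>i < 4 - k. H i) = graph_edges Q8_verts Q8_adj"
proof -
  define H where "H i = {{v, succ i v} | v. v \<in> Q8_verts}" for i
  have DE: "DVOP_edges Q8_verts k (pth k) = {{w, succ s w} | w s. w \<in> Q8_verts \<and> 4 - k \<le> s \<and> s < 4}"
  proof (intro set_eqI iffI)
    fix e assume "e \<in> DVOP_edges Q8_verts k (pth k)"
    then obtain v j where vj: "v \<in> Q8_verts" "j \<in> {1..k}" "e = path_edge (pth k v) j"
      by (auto simp: DVOP_edges_def)
    hence "e = {pth k v (j - 1), succ (4 - k + (j - 1)) (pth k v (j - 1))}" by (simp add: pth_edge)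
    moreover have "pth k v (j - 1) \<in> Q8_verts" using vj pth_V by auto
    moreover have "4 - k \<le> 4 - k + (j - 1)" "4 - k + (j - 1) < 4" using vj k by auto
    ultimately show "e \<in> {{w, succ s w} | w s. w \<in> Q8_verts \<and> 4 - k \<le> s \<and> s < 4}" by blast
  next
    fix e assume "e \<in> {{w, succ s w} | w s. w \<in> Q8_verts \<and> 4 - k \<le> s \<and> s < 4}"
    then obtain w s where ws: "w \<in> Q8_verts" "4 - k \<le> s" "s < 4" "e = {w, succ s w}" by auto
    define j where "j = s - (4 - k) + 1"
    have j: "j \<in> {1..k}" "j - 1 \<le> k" "4 - k + (j - 1) = s" using ws k by (auto simp: j_def)
    obtain v where v: "v \<in> Q8_verts" "pth k v (j - 1) = w"
      using pth_img[OF k j(2)] ws(1) by (metis imageE)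
    have "e = path_edge (pth k v) j" using j v ws by (simp add: pth_edge)
    thus "e \<in> DVOP_edges Q8_verts k (pth k)" using v j by (auto simp: DVOP_edges_def)
  qed
  have ALL: "{{w, succ s w} | w s. w \<in> Q8_verts \<and> s < 4} = graph_edges Q8_verts Q8_adj"
  proof (intro set_eqI iffI)
    fix e assume "e \<in> {{w, succ s w} | w s. w \<in> Q8_verts \<and> s < 4}"
    then obtain w s where "w \<in> Q8_verts" "s < 4" "e = {w, succ s w}" by auto
    moreover have "Q8_adj w (succ s w)" "succ s w \<in> Q8_verts" using \<open>w \<in> Q8_verts\<close> \<open>s < 4\<close> succ_adj succ_V by auto
    ultimately show "e \<in> graph_edges Q8_verts Q8_adj" unfolding graph_edges_def by blast
  next
    fix e assume "e \<in> graph_edges Q8_verts Q8_adj"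
    then obtain u w where uw: "u \<in> Q8_verts" "w \<in> Q8_verts" "Q8_adj u w" "e = {u, w}"
      by (auto simp: graph_edges_def)
    then obtain d where d: "d < 8" "w = flip u d" using adj_ex by blast
    from K4[OF uw(1) d(1)] show "e \<in> {{w, succ s w} | w s. w \<in> Q8_verts \<and> s < 4}"
    proof
      assume "\<exists>s<4. D s u = d"
      then obtain s where "s < 4" "D s u = d" by auto
      hence "e = {u, succ s u}" using uw d by (simp add: succ_def)
      thus ?thesis using \<open>s < 4\<close> uw by blast
    next
      assume "\<exists>s<4. D s (flip u d) = d"
      then obtain s where "s < 4" "D s w = d" using d by auto
      hence "succ s w = u" using d by (simp add: succ_def)
      hence "e = {w, succ s w}" using uw by auto
      thus ?thesis using \<open>s < 4\<close> uw by blast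
    qed
  qed
  show ?thesis
  proof (intro exI conjI allI impI)
    have uniq: "v = v' \<and> j = j'" if a: "v \<in> Q8_verts" "v' \<in> Q8_verts" "j \<in> {1..k}" "j' \<in> {1..k}"
        "path_edge (pth k v) j = path_edge (pth k v') j'" for v v' j j'
    proof -
      from a have "{pth k v (j - 1), succ (4 - k + (j - 1)) (pth k v (j - 1))} =
             {pth k v' (j' - 1), succ (4 - k + (j' - 1)) (pth k v' (j' - 1))}" by (simp add: pth_edge)
      moreover have "4 - k + (j - 1) < 4" "4 - k + (j' - 1) < 4" using a k by auto
      ultimately have e: "pth k v (j - 1) = pth k v' (j' - 1)" "4 - k + (j - 1) = 4 - k + (j' - 1)"
        using A_inj pth_V a by blast+
      hence "j = j'" using a k by auto
      moreover have "v = v'" using e \<open>j = j'\<close> pth_inj[OF k, of "j - 1" v v'] a by auto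
      ultimately show "v = v' \<and> j = j'" by simp
    qed
    have emb: "path_embedding Q8_verts Q8_adj k (pth k v)" if v: "v \<in> Q8_verts" for v
        unfolding path_embedding_def
      proof (intro conjI allI impI ballI)
        fix j show "pth k v j \<in> Q8_verts" using v by (rule pth_V)
      next
        have "distinct (map (pth k v) [0..<Suc k])" using dist v by auto
        hence "inj_on (pth k v) (set [0..<Suc k])" by (simp add: distinct_map)
        moreover have "set [0..<Suc k] = {0..k}" by auto
        ultimately show "inj_on (pth k v) {0..k}" by metis
      next
        fix j assume j: "j \<in> {1..k}"
        have "pth k v j = succ (4 - k + (j - 1)) (pth k v (j - 1))" using j by (cases j) auto
        moreover have "4 - k + (j - 1) < 4" using j k by auto
        ultimately show "Q8_adj (pth k v (j - 1)) (pth k v j)" using succ_adj pth_V v by simp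
      qed
    show "is_DVOP Q8_verts Q8_adj k (pth k)"
      unfolding is_DVOP_def using emb uniq by auto
  next
    fix i assume "i < 4 - k"
    thus "hamiltonian_cycle Q8_verts Q8_adj (H i)" unfolding H_def using ham hamo by auto
  next
    fix i assume i: "i < 4 - k"
    show "DVOP_edges Q8_verts k (pth k) \<inter> H i = {}"
    proof (rule ccontr)
      assume "DVOP_edges Q8_verts k (pth k) \<inter> H i \<noteq> {}"
      then obtain w s v where "w \<in> Q8_verts" "4 - k \<le> s" "s < 4" "v \<in> Q8_verts"
        "{w, succ s w} = {v, succ i v}" unfolding DE H_def by blast
      moreover have "i < 4" "i < 4 - k" using i by auto
      ultimately show False using A_inj[of w v s i] by auto
    qed
  next
    fix i j assume ij: "i < 4 - k" "j < 4 - k" "i \<noteq> j"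
    show "H i \<inter> H j = {}"
    proof (rule ccontr)
      assume "H i \<inter> H j \<noteq> {}"
      then obtain w v where "w \<in> Q8_verts" "v \<in> Q8_verts"
        "{w, succ i w} = {v, succ j v}" unfolding H_def by blast
      moreover have "i < 4" "j < 4" using ij by auto
      ultimately show False using A_inj[of w v i j] ij(3) by blast
    qed
  next
    show "DVOP_edges Q8_verts k (pth k) \<union> (\<Union>i < 4 - k. H i) = graph_edges Q8_verts Q8_adj"
      unfolding ALL[symmetric] DE H_def
    proof (intro set_eqI iffI)
      fix e assume "e \<in> {{w, succ s w} | w s. w \<in> Q8_verts \<and> 4 - k \<le> s \<and> s < 4} \<union>
          (\<Union>i<4 - k. {{v, succ i v} |v. v \<in> Q8_verts})"
      thus "e \<in> {{w, succ s w} | w s. w \<in> Q8_verts \<and> s < 4}"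
      proof
        assume "e \<in> {{w, succ s w} | w s. w \<in> Q8_verts \<and> 4 - k \<le> s \<and> s < 4}"
        thus ?thesis by blast
      next
        assume "e \<in> (\<Union>i<4 - k. {{v, succ i v} |v. v \<in> Q8_verts})"
        then obtain i v where "i < 4 - k" "v \<in> Q8_verts" "e = {v, succ i v}" by blast
        moreover have "i < 4" using \<open>i < 4 - k\<close> by simp
        ultimately show ?thesis by blast
      qed
    next
      fix e assume "e \<in> {{w, succ s w} | w s. w \<in> Q8_verts \<and> s < 4}"
      then obtain w s where ws: "w \<in> Q8_verts" "s < 4" "e = {w, succ s w}" by auto
      show "e \<in> {{w, succ s w} | w s. w \<in> Q8_verts \<and> 4 - k \<le> s \<and> s < 4} \<union>
          (\<Union>i<4 - k. {{v, succ i v} |v. v \<in> Q8_verts})"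
      proof (cases "s < 4 - k")
        case True thus ?thesis using ws by blast
      next
        case False thus ?thesis using ws by auto
      qed
    qed
  qed
qed

lemma orb_0: "orb (succ 0) v0 (succ 0 v0) 255"
  by (simp add: orb_num v0_def succ_def D_def look_tab flip_ev)
lemma orb_1: "orb (succ 1) v0 (succ 1 v0) 255"
  by (simp add: orb_num v0_def succ_def D_def look_tab flip_ev)
lemma orb_2: "orb (succ 2) v0 (succ 2 v0) 255"
  by (simp add: orb_num v0_def succ_def D_def look_tab flip_ev)
lemma orb_3: "orb (succ 3) v0 (succ 3 v0) 255"
  by (simp add: orb_num v0_def succ_def D_def look_tab flip_ev)
lemma orb_s: "s \<in> {0,1,2,3} \<Longrightarrow> orb (succ s) v0 (succ s v0) 255"
  using orb_0 orb_1 orb_2 orb_3 by auto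

lemma hamo: "\<forall>s<4. orb (succ s) v0 (succ s v0) 255"
proof (intro allI impI)
  fix s :: nat assume "s < 4"
  hence "s \<in> {0,1,2,3}" by auto
  thus "orb (succ s) v0 (succ s v0) 255" by (rule orb_s)
qed

lemma dist_0: "\<forall>v\<in>Q8_verts. distinct (map (pth 0 v) [0..<Suc 0])"
  unfolding V_allv
  by (simp add: allv_num upt_rec pth_num succ_def D_def look_tab flip_ev)
lemma dist_1: "\<forall>v\<in>Q8_verts. distinct (map (pth 1 v) [0..<Suc 1])"
  unfolding V_allv
  by (simp add: allv_num upt_rec pth_num succ_def D_def look_tab flip_ev)
lemma dist_2: "\<forall>v\<in>Q8_verts. distinct (map (pth 2 v) [0..<Suc 2])"
  unfolding V_allv
  by (simp add: allv_num upt_rec pth_num succ_def D_def look_tab flip_ev)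
lemma dist_3: "\<forall>v\<in>Q8_verts. distinct (map (pth 3 v) [0..<Suc 3])"
  unfolding V_allv
  by (simp add: allv_num upt_rec pth_num succ_def D_def look_tab flip_ev)
lemma dist_4: "\<forall>v\<in>Q8_verts. distinct (map (pth 4 v) [0..<Suc 4])"
  unfolding V_allv
  by (simp add: allv_num upt_rec pth_num succ_def D_def look_tab flip_ev)
lemma dist_k: "k \<in> {0,1,2,3,4} \<Longrightarrow> \<forall>v\<in>Q8_verts. distinct (map (pth k v) [0..<Suc k])"
proof -
  assume "k \<in> {0,1,2,3,4}"
  hence "k = 0 \<or> k = 1 \<or> k = 2 \<or> k = 3 \<or> k = 4" by auto
  thus ?thesis using dist_0 dist_1 dist_2 dist_3 dist_4 by metis
qed

theorem lemma9:
  fixes k :: nat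
  assumes "k \<le> 4"
  shows "\<exists>(p :: bool list \<Rightarrow> nat \<Rightarrow> bool list) (H :: nat \<Rightarrow> bool list set set).
    is_DVOP Q8_verts Q8_adj k p \<and>
    (\<forall>i < 4 - k. hamiltonian_cycle Q8_verts Q8_adj (H i)) \<and>
    (\<forall>i < 4 - k. DVOP_edges Q8_verts k p \<inter> H i = {}) \<and>
    (\<forall>i < 4 - k. \<forall>j < 4 - k. i \<noteq> j \<longrightarrow> H i \<inter> H j = {}) \<and>
    DVOP_edges Q8_verts k p \<union> (\<Union>i < 4 - k. H i) = graph_edges Q8_verts Q8_adj"
proof -
  have "k \<in> {0,1,2,3,4}" using assms by auto
  thus ?thesis using main[OF assms dist_k hamo] by blast
qed

end
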